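(* Let $|\psi_1\rangle,\dots,|\psi_4\rangle$ be pure qubit states with $\langle\psi_1|\psi_3\rangle=\langle\psi_2|\psi_4\rangle=0$, and consider the ensemble $\{1/4,\rho_x=|\psi_x\rangle\langle\psi_x|\}_{x=1}^4$. Then its symmetry operator is $K=I/4$ (the same for all such choices of the two orthogonal pairs), so all such sets lie in the same equivalence class, and $P_{\mathrm{guess}}=\mathrm{tr}[K]=1/2$.
   Context: For an ensemble $\{q_x,\rho_x\}$, the symmetry operator is the (unique) Hermitian $K$ for which there exist $r_x\ge0$, density operators $\sigma_x$ and a POVM $\{M_x\}$ with $K=q_x\rho_x+r_x\sigma_x$ and $r_x\mathrm{tr}[M_x\sigma_x]=0$ for all $x$; it satisfies $\mathrm{tr}[K]=P_{\mathrm{guess}}=\max_{\text{POVMs}}\sum_x q_x\mathrm{tr}[M_x\rho_x]$. Two ensembles are equivalent (same equivalence class) if their symmetry operators are unitarily equivalent. *)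

theory Defs
  imports "Jordan_Normal_Form.Schur_Decomposition"
begin

definition braket :: "complex vec \<Rightarrow> complex vec \<Rightarrow> complex" where
  "braket a b = (\<Sum>i<dim_vec a. cnj (a $ i) * b $ i)"

definition ketbra :: "complex vec \<Rightarrow> complex mat" where
  "ketbra v = mat (dim_vec v) (dim_vec v) (\<lambda>(i,j). v $ i * cnj (v $ j))"

definition trace :: "complex mat \<Rightarrow> complex" where
  "trace A = (\<Sum>i<dim_row A. A $$ (i,i))"

definition hermitian :: "complex mat \<Rightarrow> bool" where
  "hermitian A \<longleftrightarrow> mat_adjoint A = A"

definition psd :: "nat \<Rightarrow> complex mat \<Rightarrow> bool" where
  "psd n A \<longleftrightarrow> A \<in> carrier_mat n n \<and> hermitian A \<and>
     (\<forall>v \<in> carrier_vec n. 0 \<le> Re (braket v (A *\<^sub>v v)))"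

definition density :: "nat \<Rightarrow> complex mat \<Rightarrow> bool" where
  "density n A \<longleftrightarrow> psd n A \<and> trace A = 1"

definition unitary :: "nat \<Rightarrow> complex mat \<Rightarrow> bool" where
  "unitary n U \<longleftrightarrow> U \<in> carrier_mat n n \<and> U * mat_adjoint U = 1\<^sub>m n \<and> mat_adjoint U * U = 1\<^sub>m n"

definition is_povm :: "nat \<Rightarrow> 'x set \<Rightarrow> ('x \<Rightarrow> complex mat) \<Rightarrow> bool" where
  "is_povm n X M \<longleftrightarrow> (\<forall>x\<in>X. psd n (M x)) \<and>
     mat n n (\<lambda>ij. \<Sum>x\<in>X. M x $$ ij) = 1\<^sub>m n"

definition is_symm_op :: "nat \<Rightarrow> 'x set \<Rightarrow> ('x \<Rightarrow> real) \<Rightarrow> ('x \<Rightarrow> complex mat) \<Rightarrow> complex mat \<Rightarrow> bool" where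
  "is_symm_op n X q \<rho> K \<longleftrightarrow> K \<in> carrier_mat n n \<and> hermitian K \<and>
     (\<exists>r \<sigma> M. is_povm n X M \<and>
        (\<forall>x\<in>X. r x \<ge> 0 \<and> density n (\<sigma> x) \<and>
           K = complex_of_real (q x) \<cdot>\<^sub>m \<rho> x + complex_of_real (r x) \<cdot>\<^sub>m \<sigma> x \<and>
           complex_of_real (r x) * trace (M x * \<sigma> x) = 0))"

definition symm_op :: "nat \<Rightarrow> 'x set \<Rightarrow> ('x \<Rightarrow> real) \<Rightarrow> ('x \<Rightarrow> complex mat) \<Rightarrow> complex mat" where
  "symm_op n X q \<rho> = (THE K. is_symm_op n X q \<rho> K)"

definition pguess :: "nat \<Rightarrow> 'x set \<Rightarrow> ('x \<Rightarrow> real) \<Rightarrow> ('x \<Rightarrow> complex mat) \<Rightarrow> real" where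
  "pguess n X q \<rho> = Sup {Re (\<Sum>x\<in>X. complex_of_real (q x) * trace (M x * \<rho> x)) | M. is_povm n X M}"

definition ens_equiv :: "nat \<Rightarrow> 'x set \<Rightarrow> ('x \<Rightarrow> real) \<Rightarrow> ('x \<Rightarrow> complex mat) \<Rightarrow>
    'y set \<Rightarrow> ('y \<Rightarrow> real) \<Rightarrow> ('y \<Rightarrow> complex mat) \<Rightarrow> bool" where
  "ens_equiv n X q \<rho> Y p \<tau> \<longleftrightarrow>
     (\<exists>U. unitary n U \<and> symm_op n Y p \<tau> = U * symm_op n X q \<rho> * mat_adjoint U)"

end

theory Submission
  imports Defs
begin


lemma adj_idx: "A \<in> carrier_mat n m \<Longrightarrow> i < m \<Longrightarrow> j < n \<Longrightarrow> mat_adjoint A $$ (i,j) = cnj (A $$ (j,i))"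
  unfolding mat_adjoint_def by (simp add: mat_of_rows_def)
lemma adj_carrier: "A \<in> carrier_mat n m \<Longrightarrow> mat_adjoint A \<in> carrier_mat m n"
  unfolding mat_adjoint_def by (simp add: mat_of_rows_def)

lemma braket2: "v \<in> carrier_vec 2 \<Longrightarrow> braket v w = cnj (v$0) * w$0 + cnj (v$1) * w$1"
  unfolding braket_def by (simp add: numeral_2_eq_2)
lemma trace2: "A \<in> carrier_mat 2 2 \<Longrightarrow> trace A = A$$(0,0) + A$$(1,1)"
  unfolding trace_def by (simp add: numeral_2_eq_2)
lemma mult2: "A \<in> carrier_mat 2 2 \<Longrightarrow> B \<in> carrier_mat 2 2 \<Longrightarrow> i < 2 \<Longrightarrow> j < 2 \<Longrightarrow>
   (A * B) $$ (i,j) = A$$(i,0) * B$$(0,j) + A$$(i,1)*B$$(1,j)"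
  by (simp add: scalar_prod_def numeral_2_eq_2)
lemma multv2: "A \<in> carrier_mat 2 2 \<Longrightarrow> v \<in> carrier_vec 2 \<Longrightarrow> i < 2 \<Longrightarrow>
   (A *\<^sub>v v) $ i = A$$(i,0) * v$0 + A$$(i,1)*v$1"
  by (simp add: scalar_prod_def numeral_2_eq_2)
lemma ketbra_idx: "v \<in> carrier_vec n \<Longrightarrow> i < n \<Longrightarrow> j < n \<Longrightarrow> ketbra v $$ (i,j) = v$i * cnj (v$j)"
  by (simp add: ketbra_def)
lemma ketbra_carrier: "v \<in> carrier_vec n \<Longrightarrow> ketbra v \<in> carrier_mat n n"
  by (simp add: ketbra_def)
lemma ketbra_dims[simp]: "dim_row (ketbra v) = dim_vec v" "dim_col (ketbra v) = dim_vec v"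
  by (simp_all add: ketbra_def)
lemma mat_eq2: "A \<in> carrier_mat 2 2 \<Longrightarrow> B \<in> carrier_mat 2 2 \<Longrightarrow> A$$(0,0) = B$$(0,0) \<Longrightarrow> A$$(0,1) = B$$(0,1)
  \<Longrightarrow> A$$(1,0) = B$$(1,0) \<Longrightarrow> A$$(1,1) = B$$(1,1) \<Longrightarrow> A = B"
  apply (rule eq_matI) apply (auto simp: less_2_cases_iff) done
lemma vec_eq2: "v \<in> carrier_vec 2 \<Longrightarrow> w \<in> carrier_vec 2 \<Longrightarrow> v$0 = w$0 \<Longrightarrow> v$1 = w$1 \<Longrightarrow> v = w"
  apply (rule eq_vecI) apply (auto simp: less_2_cases_iff) done
lemma herm2: assumes A: "A \<in> carrier_mat 2 2"
  shows "hermitian A \<longleftrightarrow> (A$$(0,0) = cnj (A$$(0,0)) \<and> A$$(1,1) = cnj (A$$(1,1)) \<and> A$$(0,1) = cnj (A$$(1,0)))"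
proof
  assume "hermitian A"
  hence h: "mat_adjoint A = A" unfolding hermitian_def .
  have e: "A$$(i,j) = cnj (A$$(j,i))" if "i < 2" "j < 2" for i j
  proof -
    have "A$$(i,j) = mat_adjoint A $$ (i,j)" using h by simp
    also have "\<dots> = cnj (A$$(j,i))" using adj_idx[OF A that] .
    finally show ?thesis .
  qed
  show "A$$(0,0) = cnj (A$$(0,0)) \<and> A$$(1,1) = cnj (A$$(1,1)) \<and> A$$(0,1) = cnj (A$$(1,0))"
    using e[of 0 0] e[of 1 1] e[of 0 1] by simp
next
  assume c: "A$$(0,0) = cnj (A$$(0,0)) \<and> A$$(1,1) = cnj (A$$(1,1)) \<and> A$$(0,1) = cnj (A$$(1,0))"
  have "mat_adjoint A = A"
    apply (rule mat_eq2[OF adj_carrier[OF A] A])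
    using c by (simp_all add: adj_idx[OF A])
  thus "hermitian A" unfolding hermitian_def .
qed

lemma braket_cnj2: "v \<in> carrier_vec 2 \<Longrightarrow> w \<in> carrier_vec 2 \<Longrightarrow> braket w v = cnj (braket v w)"
  by (simp add: braket2)

lemma compl2:
  assumes u: "u \<in> carrier_vec 2" and w: "w \<in> carrier_vec 2"
    and uu: "braket u u = 1" and ww: "braket w w = 1" and uw: "braket u w = 0"
  shows "ketbra u + ketbra w = 1\<^sub>m 2"
proof -
  define U where "U = mat 2 2 (\<lambda>(i,j). if j = 0 then u$i else w$i)"
  have Uc: "U \<in> carrier_mat 2 2" unfolding U_def by simp
  have Ac: "mat_adjoint U \<in> carrier_mat 2 2" using adj_carrier[OF Uc] .
  have wu: "braket w u = 0" using braket_cnj2[OF u w] uw by simp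
  have ent: "(mat_adjoint U * U)$$(i,j) = cnj (U$$(0,i)) * U$$(0,j) + cnj(U$$(1,i))*U$$(1,j)"
    if "i < 2" "j < 2" for i j
    using mult2[OF Ac Uc that] adj_idx[OF Uc] that by simp
  have U00: "U$$(0,0) = u$0" "U$$(Suc 0,0) = u$Suc 0" "U$$(0,Suc 0) = w$0" "U$$(Suc 0,Suc 0) = w$Suc 0"
    unfolding U_def by simp_all
  have "mat_adjoint U * U = 1\<^sub>m 2"
    apply (rule mat_eq2[OF _ one_carrier_mat])
    using Ac Uc apply simp
    using uu ww uw wu by (simp_all add: ent U00 braket2[OF u] braket2[OF w])
  hence UA: "U * mat_adjoint U = 1\<^sub>m 2" by (rule mat_mult_left_right_inverse[OF Ac Uc])
  have e: "\<And>i j. i < 2 \<Longrightarrow> j < 2 \<Longrightarrow> u$i * cnj (u$j) + w$i * cnj (w$j) = (1\<^sub>m 2 :: complex mat) $$ (i,j)"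
  proof -
    fix i j :: nat assume i: "i < 2" and j: "j < 2"
    have "(U * mat_adjoint U) $$ (i,j) = U$$(i,0) * mat_adjoint U $$ (0,j) + U$$(i,1) * mat_adjoint U $$ (1,j)"
      using mult2[OF Uc Ac i j] .
    also have "\<dots> = U$$(i,0) * cnj (U$$(j,0)) + U$$(i,1) * cnj (U$$(j,1))"
      using i j by (simp add: adj_idx[OF Uc])
    also have "\<dots> = u$i * cnj (u$j) + w$i * cnj (w$j)"
      using i j by (simp add: U_def)
    finally show "u$i * cnj (u$j) + w$i * cnj (w$j) = (1\<^sub>m 2 :: complex mat) $$ (i,j)" using UA by simp
  qed
  show ?thesis
    apply (rule eq_matI)
    using e u w by (auto simp: ketbra_idx)
qed

lemma tr_ketbra: assumes A: "A \<in> carrier_mat 2 2" and v: "v \<in> carrier_vec 2"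
  shows "trace (A * ketbra v) = braket v (A *\<^sub>v v)"
proof -
  have c: "A * ketbra v \<in> carrier_mat 2 2" using A ketbra_carrier[OF v] by simp
  show ?thesis
    using A v ketbra_carrier[OF v]
    by (simp add: trace2[OF c] mult2 multv2 ketbra_idx braket2 algebra_simps del: index_mult_mat index_mult_mat_vec)
qed

lemma braket_add_smult:
  assumes P: "P \<in> carrier_mat 2 2" and v: "v \<in> carrier_vec 2" and w: "w \<in> carrier_vec 2"
  shows "braket (v + c \<cdot>\<^sub>v w) (P *\<^sub>v (v + c \<cdot>\<^sub>v w)) =
    braket v (P *\<^sub>v v) + c * braket v (P *\<^sub>v w) + cnj c * braket w (P *\<^sub>v v) + cnj c * c * braket w (P *\<^sub>v w)"
proof -
  have u: "v + c \<cdot>\<^sub>v w \<in> carrier_vec 2" using v w by simp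
  have e: "(v + c \<cdot>\<^sub>v w) $ i = v $ i + c * w $ i" if "i < 2" for i using v w that by simp
  show ?thesis
    using P v w u
    by (simp add: braket2 multv2 e algebra_simps)
qed

lemma herm_braket:
  assumes P: "P \<in> carrier_mat 2 2" and h: "hermitian P" and v: "v \<in> carrier_vec 2" and w: "w \<in> carrier_vec 2"
  shows "braket v (P *\<^sub>v w) = cnj (braket w (P *\<^sub>v v))"
proof -
  have hh: "P$$(0,0) = cnj (P$$(0,0))" "P$$(1,1) = cnj (P$$(1,1))" "P$$(0,1) = cnj (P$$(1,0))"
    using h herm2[OF P] by auto
  have r1: "cnj (P$$(0,0)) = P$$(0,0)" "cnj (P$$(Suc 0,Suc 0)) = P$$(Suc 0,Suc 0)" "P$$(Suc 0,0) = cnj (P$$(0,Suc 0))"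
    using hh by (metis One_nat_def complex_cnj_cnj)+
  show ?thesis using P v w
    by (simp add: braket2 multv2 r1 algebra_simps del: index_mult_mat_vec)
qed

lemma quad_zero:
  fixes a b c :: real
  assumes f: "\<And>t. 0 \<le> b + 2*t*a + t^2*c" and b: "b \<le> 0" and c: "c \<ge> 0"
  shows "a = 0"
proof -
  define t where "t = - a / (c+1)"
  have cp: "c + 1 > 0" using c by simp
  have "0 \<le> b + 2*t*a + t^2*c" by (rule f)
  hence "0 \<le> (b + 2*t*a + t^2*c) * (c+1)^2" using cp by simp
  also have "(b + 2*t*a + t^2*c) * (c+1)^2 = b*(c+1)^2 + 2*a*(t*(c+1))*(c+1) + c*(t*(c+1))^2"
    by (simp add: algebra_simps power2_eq_square)
  also have "t*(c+1) = -a" unfolding t_def using cp by simp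
  also have "b*(c+1)^2 + 2*a*(-a)*(c+1) + c*(-a)^2 = b*(c+1)^2 - a^2*(c+2)"
    by (simp add: algebra_simps power2_eq_square)
  finally have "a^2 * (c+2) \<le> b*(c+1)^2" by simp
  also have "b*(c+1)^2 \<le> 0" using b by (simp add: mult_nonpos_nonneg)
  finally have "a^2 * (c+2) \<le> 0" .
  moreover have "c + 2 > 0" using c by simp
  ultimately have "a^2 \<le> 0" by (simp add: mult_le_0_iff)
  thus ?thesis by simp
qed

lemma psd_zero:
  assumes p: "psd 2 P" and v: "v \<in> carrier_vec 2" and r: "Re (braket v (P *\<^sub>v v)) \<le> 0"
  shows "P *\<^sub>v v = 0\<^sub>v 2"
proof -
  have P: "P \<in> carrier_mat 2 2" and h: "hermitian P"
    and nn: "\<And>u. u \<in> carrier_vec 2 \<Longrightarrow> 0 \<le> Re (braket u (P *\<^sub>v u))"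
    using p unfolding psd_def by auto
  define w where "w = P *\<^sub>v v"
  have w: "w \<in> carrier_vec 2" unfolding w_def using P v by simp
  define a where "a = Re (braket w w)"
  define b where "b = Re (braket v (P *\<^sub>v v))"
  define c where "c = Re (braket w (P *\<^sub>v w))"
  have c0: "c \<ge> 0" unfolding c_def by (rule nn[OF w])
  have f: "0 \<le> b + 2*t*a + t^2*c" for t
  proof -
    have "0 \<le> Re (braket (v + complex_of_real t \<cdot>\<^sub>v w) (P *\<^sub>v (v + complex_of_real t \<cdot>\<^sub>v w)))"
      using v w by (intro nn) simp
    also have "braket (v + complex_of_real t \<cdot>\<^sub>v w) (P *\<^sub>v (v + complex_of_real t \<cdot>\<^sub>v w))
       = braket v (P *\<^sub>v v) + complex_of_real t * cnj (braket w w) + complex_of_real t * braket w w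
         + complex_of_real t * complex_of_real t * braket w (P *\<^sub>v w)"
      using braket_add_smult[OF P v w, of "complex_of_real t"] herm_braket[OF P h v w]
      by (simp add: w_def)
    also have "Re \<dots> = b + 2*t*a + t^2*c"
      by (simp add: a_def b_def c_def power2_eq_square)
    finally show ?thesis .
  qed
  have a0: "a = 0" using quad_zero[OF f _ c0] r unfolding b_def by simp
  have "Re (cnj (w$0) * w$0) + Re (cnj (w$1) * w$1) = 0"
    using a0 unfolding a_def braket2[OF w] by simp
  moreover have "Re (cnj z * z) = (Re z)^2 + (Im z)^2" for z
    by (simp add: power2_eq_square)
  ultimately have "(Re (w$0))^2 + (Im (w$0))^2 + ((Re (w$1))^2 + (Im (w$1))^2) = 0" by simp
  hence "Re (w$0) = 0 \<and> Im (w$0) = 0 \<and> Re (w$1) = 0 \<and> Im (w$1) = 0"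
    by (smt (verit) sum_power2_eq_zero_iff zero_le_power2)
  hence "w$0 = 0" "w$1 = 0" by (simp_all add: complex_eq_iff)
  hence "w = 0\<^sub>v 2" using w by (intro vec_eq2) auto
  thus ?thesis unfolding w_def .
qed

lemma trace_add2: "A \<in> carrier_mat 2 2 \<Longrightarrow> B \<in> carrier_mat 2 2 \<Longrightarrow> trace (A + B) = trace A + trace B"
  by (simp add: trace2)
lemma trace_smult2: "A \<in> carrier_mat 2 2 \<Longrightarrow> trace (c \<cdot>\<^sub>m A) = c * trace A"
  by (simp add: trace2 algebra_simps)
lemma braket_add2: "u \<in> carrier_vec 2 \<Longrightarrow> v \<in> carrier_vec 2 \<Longrightarrow> w \<in> carrier_vec 2 \<Longrightarrow>
   braket u (v + w) = braket u v + braket u w"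
  by (simp add: braket2 algebra_simps)
lemma braket_smult2: "u \<in> carrier_vec 2 \<Longrightarrow> v \<in> carrier_vec 2 \<Longrightarrow> braket u (c \<cdot>\<^sub>v v) = c * braket u v"
  by (simp add: braket2 algebra_simps)
lemma smult_mulv2: assumes A: "A \<in> carrier_mat 2 2" and v: "v \<in> carrier_vec 2"
  shows "(c \<cdot>\<^sub>m A) *\<^sub>v v = c \<cdot>\<^sub>v (A *\<^sub>v v)"
proof -
  have cA: "c \<cdot>\<^sub>m A \<in> carrier_mat 2 2" using A by simp
  have e: "((c \<cdot>\<^sub>m A) *\<^sub>v v) $ i = (c \<cdot>\<^sub>v (A *\<^sub>v v)) $ i" if "i < 2" for i
  proof -
    have "((c \<cdot>\<^sub>m A) *\<^sub>v v) $ i = (c \<cdot>\<^sub>m A)$$(i,0) * v$0 + (c \<cdot>\<^sub>m A)$$(i,1) * v$1"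
      by (rule multv2[OF cA v that])
    also have "\<dots> = c * (A$$(i,0) * v$0 + A$$(i,1) * v$1)" using A that by (simp add: algebra_simps)
    also have "A$$(i,0) * v$0 + A$$(i,1) * v$1 = (A *\<^sub>v v) $ i" by (rule multv2[OF A v that, symmetric])
    also have "c * \<dots> = (c \<cdot>\<^sub>v (A *\<^sub>v v)) $ i" using A v that by simp
    finally show ?thesis .
  qed
  show ?thesis
    apply (rule vec_eq2[OF mult_mat_vec_carrier[OF cA v]])
    using A v e by auto
qed

lemma ketbra_mulv: assumes v: "v \<in> carrier_vec 2" and u: "u \<in> carrier_vec 2"
  shows "ketbra v *\<^sub>v u = braket v u \<cdot>\<^sub>v v"
proof -
  have K: "ketbra v \<in> carrier_mat 2 2" by (rule ketbra_carrier[OF v])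
  have e: "(ketbra v *\<^sub>v u) $ i = (braket v u \<cdot>\<^sub>v v) $ i" if "i < 2" for i
  proof -
    have "(ketbra v *\<^sub>v u) $ i = ketbra v $$(i,0) * u$0 + ketbra v $$(i,1) * u$1"
      by (rule multv2[OF K u that])
    also have "\<dots> = v$i * (cnj (v$0) * u$0 + cnj (v$1) * u$1)" using v that by (simp add: ketbra_idx algebra_simps)
    also have "\<dots> = (braket v u \<cdot>\<^sub>v v) $ i" using v that by (simp add: braket2 mult.commute)
    finally show ?thesis .
  qed
  show ?thesis using e K v u
    by (intro vec_eq2) (auto intro: mult_mat_vec_carrier)
qed

lemma psd_ketbra: assumes v: "v \<in> carrier_vec 2" shows "psd 2 (ketbra v)"
  unfolding psd_def
proof (intro conjI ballI)
  show "ketbra v \<in> carrier_mat 2 2" using ketbra_carrier[OF v] .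
  show "hermitian (ketbra v)"
    using v by (simp add: herm2[OF ketbra_carrier[OF v]] ketbra_idx)
  fix u :: "complex vec" assume u: "u \<in> carrier_vec 2"
  have "braket u (ketbra v *\<^sub>v u) = braket v u * cnj (braket v u)"
    using u v by (simp add: ketbra_mulv braket_smult2 braket_cnj2[OF v u])
  also have "\<dots> = complex_of_real ((Re (braket v u))^2 + (Im (braket v u))^2)"
    by (rule complex_mult_cnj)
  finally show "0 \<le> Re (braket u (ketbra v *\<^sub>v u))" by simp
qed

lemma density_ketbra: assumes v: "v \<in> carrier_vec 2" and n: "braket v v = 1" shows "density 2 (ketbra v)"
  unfolding density_def using psd_ketbra[OF v] n v
  by (simp add: trace2[OF ketbra_carrier[OF v]] ketbra_idx braket2 mult.commute)

lemma psd_zero_mat: "psd 2 (0\<^sub>m 2 2)"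
  unfolding psd_def by (simp add: herm2 braket2)

lemma psd_smult: assumes p: "psd 2 P" and r: "r \<ge> 0" shows "psd 2 (complex_of_real r \<cdot>\<^sub>m P)"
proof -
  have P: "P \<in> carrier_mat 2 2" and h: "hermitian P"
    and nn: "\<And>u. u \<in> carrier_vec 2 \<Longrightarrow> 0 \<le> Re (braket u (P *\<^sub>v u))"
    using p unfolding psd_def by auto
  have hh: "P$$(0,0) = cnj (P$$(0,0)) \<and> P$$(1,1) = cnj (P$$(1,1)) \<and> P$$(0,1) = cnj (P$$(1,0))"
    using h herm2[OF P] by auto
  show ?thesis unfolding psd_def
  proof (intro conjI ballI)
    show "complex_of_real r \<cdot>\<^sub>m P \<in> carrier_mat 2 2" using P by simp
    show "hermitian (complex_of_real r \<cdot>\<^sub>m P)"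
      using P hh by (subst herm2) auto
    fix u :: "complex vec" assume u: "u \<in> carrier_vec 2"
    have "braket u ((complex_of_real r \<cdot>\<^sub>m P) *\<^sub>v u) = complex_of_real r * braket u (P *\<^sub>v u)"
      using u P by (simp add: smult_mulv2 braket_smult2)
    thus "0 \<le> Re (braket u ((complex_of_real r \<cdot>\<^sub>m P) *\<^sub>v u))"
      using nn[OF u] r by simp
  qed
qed

lemma mul_ketbra_eig: assumes A: "A \<in> carrier_mat 2 2" and u: "u \<in> carrier_vec 2"
  and e: "A *\<^sub>v u = c \<cdot>\<^sub>v u"
  shows "A * ketbra u = c \<cdot>\<^sub>m ketbra u"
proof -
  have e0: "A$$(i,0) * u$0 + A$$(i,1) * u$1 = c * u$i" if "i < 2" for i
    using arg_cong[OF e, of "\<lambda>x. x $ i"] multv2[OF A u that] that u by simp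
  have ent: "(A * ketbra u)$$(i,j) = (c \<cdot>\<^sub>m ketbra u) $$ (i,j)" if "i < 2" "j < 2" for i j
  proof -
    have "(A * ketbra u)$$(i,j) = A$$(i,0) * ketbra u $$ (0,j) + A$$(i,1) * ketbra u $$ (1,j)"
      using mult2[OF A ketbra_carrier[OF u] that] .
    also have "\<dots> = (A$$(i,0) * u$0 + A$$(i,1) * u$1) * cnj (u$j)"
      using u that by (simp add: ketbra_idx algebra_simps)
    also have "\<dots> = (c \<cdot>\<^sub>m ketbra u) $$ (i,j)"
      using e0[OF that(1)] u that ketbra_carrier[OF u] by (simp add: ketbra_idx)
    finally show ?thesis .
  qed
  show ?thesis
    apply (rule eq_matI)
    using A u ketbra_carrier[OF u] ent by auto
qed

lemma sum4: "(\<Sum>x\<in>{1..4::nat}. f x) = f 1 + f 2 + f 3 + f 4"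
proof -
  have "{1..4::nat} = {1,2,3,4}" by auto
  thus ?thesis by (simp add: add.assoc)
qed

lemma trace_kk: "u \<in> carrier_vec 2 \<Longrightarrow> v \<in> carrier_vec 2 \<Longrightarrow> trace (ketbra u * ketbra v) = braket v u * braket u v"
  by (simp add: tr_ketbra ketbra_carrier ketbra_mulv braket_smult2)

lemma tr_le:
  assumes N: "psd 2 N" and u: "u \<in> carrier_vec 2" and w: "w \<in> carrier_vec 2"
    and uu: "braket u u = 1" and ww: "braket w w = 1" and uw: "braket u w = 0"
  shows "Re (trace (N * ketbra u)) \<le> Re (trace N)"
proof -
  have Nc: "N \<in> carrier_mat 2 2" using N unfolding psd_def by auto
  have "N = N * (ketbra u + ketbra w)" using compl2[OF u w uu ww uw] Nc by simp
  also have "\<dots> = N * ketbra u + N * ketbra w"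
    using Nc ketbra_carrier[OF u] ketbra_carrier[OF w] by (simp add: mult_add_distrib_mat)
  finally have "trace N = trace (N * ketbra u) + trace (N * ketbra w)"
    using trace_add2[OF mult_carrier_mat[OF Nc ketbra_carrier[OF u]] mult_carrier_mat[OF Nc ketbra_carrier[OF w]]]
    by simp
  moreover have "0 \<le> Re (trace (N * ketbra w))"
    using N w tr_ketbra[OF Nc w] unfolding psd_def by auto
  ultimately show ?thesis by simp
qed

definition good :: "(nat \<Rightarrow> complex vec) \<Rightarrow> bool" where
  "good \<psi> \<longleftrightarrow> (\<forall>x\<in>{1..4}. \<psi> x \<in> carrier_vec 2 \<and> braket (\<psi> x) (\<psi> x) = 1)
      \<and> braket (\<psi> 1) (\<psi> 3) = 0 \<and> braket (\<psi> 2) (\<psi> 4) = 0"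

lemma goodD: assumes "good \<psi>"
  shows "\<psi> 1 \<in> carrier_vec 2" "\<psi> 2 \<in> carrier_vec 2" "\<psi> 3 \<in> carrier_vec 2" "\<psi> 4 \<in> carrier_vec 2"
    "braket (\<psi> 1) (\<psi> 1) = 1" "braket (\<psi> 2) (\<psi> 2) = 1" "braket (\<psi> 3) (\<psi> 3) = 1" "braket (\<psi> 4) (\<psi> 4) = 1"
    "braket (\<psi> 1) (\<psi> 3) = 0" "braket (\<psi> 2) (\<psi> 4) = 0"
    "braket (\<psi> 3) (\<psi> 1) = 0" "braket (\<psi> 4) (\<psi> 2) = 0"
proof -
  have a: "\<psi> x \<in> carrier_vec 2 \<and> braket (\<psi> x) (\<psi> x) = 1" if "x \<in> {1..4}" for x
    using assms that unfolding good_def by blast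
  show c: "\<psi> 1 \<in> carrier_vec 2" "\<psi> 2 \<in> carrier_vec 2" "\<psi> 3 \<in> carrier_vec 2" "\<psi> 4 \<in> carrier_vec 2"
    "braket (\<psi> 1) (\<psi> 1) = 1" "braket (\<psi> 2) (\<psi> 2) = 1" "braket (\<psi> 3) (\<psi> 3) = 1" "braket (\<psi> 4) (\<psi> 4) = 1"
    using a[of 1] a[of 2] a[of 3] a[of 4] by auto
  show o: "braket (\<psi> 1) (\<psi> 3) = 0" "braket (\<psi> 2) (\<psi> 4) = 0" using assms unfolding good_def by auto
  show "braket (\<psi> 3) (\<psi> 1) = 0" "braket (\<psi> 4) (\<psi> 2) = 0"
    using braket_cnj2[OF c(1) c(3)] braket_cnj2[OF c(2) c(4)] o by auto
qed

lemma povmD: fixes M :: "nat \<Rightarrow> complex mat" assumes "is_povm 2 {1..4} M"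
  shows "psd 2 (M 1)" "psd 2 (M 2)" "psd 2 (M 3)" "psd 2 (M 4)"
    "M 1 \<in> carrier_mat 2 2" "M 2 \<in> carrier_mat 2 2" "M 3 \<in> carrier_mat 2 2" "M 4 \<in> carrier_mat 2 2"
    "M 1 + M 2 + M 3 + M 4 = 1\<^sub>m 2"
proof -
  show p: "psd 2 (M 1)" "psd 2 (M 2)" "psd 2 (M 3)" "psd 2 (M 4)" using assms unfolding is_povm_def by auto
  show c: "M 1 \<in> carrier_mat 2 2" "M 2 \<in> carrier_mat 2 2" "M 3 \<in> carrier_mat 2 2" "M 4 \<in> carrier_mat 2 2"
    using p unfolding psd_def by auto
  have eq: "mat 2 2 (\<lambda>ij. \<Sum>x\<in>{1..4}. M x $$ ij) = 1\<^sub>m 2" using assms unfolding is_povm_def by auto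
  have e: "(M 1 + M 2 + M 3 + M 4) $$ (i,j) = (1\<^sub>m 2 :: complex mat) $$ (i,j)" if "i < 2" "j < 2" for i j
  proof -
    have "(M 1 + M 2 + M 3 + M 4) $$ (i,j) = (\<Sum>x\<in>{1..4}. M x $$ (i,j))"
      unfolding sum4 using c that by simp
    also have "\<dots> = mat 2 2 (\<lambda>ij. \<Sum>x\<in>{1..4}. M x $$ ij) $$ (i,j)" using that by simp
    finally show ?thesis using eq by simp
  qed
  show "M 1 + M 2 + M 3 + M 4 = 1\<^sub>m 2"
    apply (rule eq_matI) using c e by auto
qed

lemma bound:
  assumes g: "good \<psi>" and N: "is_povm 2 {1..4} N"
  shows "Re (\<Sum>x\<in>{1..4}. complex_of_real (1/4) * trace (N x * ketbra (\<psi> x))) \<le> 1/2"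
proof -
  note G = goodD[OF g] and P = povmD[OF N]
  have t1: "Re (trace (N 1 * ketbra (\<psi> 1))) \<le> Re (trace (N 1))" by (rule tr_le[OF P(1) G(1) G(3) G(5) G(7) G(9)])
  have t2: "Re (trace (N 2 * ketbra (\<psi> 2))) \<le> Re (trace (N 2))" by (rule tr_le[OF P(2) G(2) G(4) G(6) G(8) G(10)])
  have t3: "Re (trace (N 3 * ketbra (\<psi> 3))) \<le> Re (trace (N 3))" by (rule tr_le[OF P(3) G(3) G(1) G(7) G(5) G(11)])
  have t4: "Re (trace (N 4 * ketbra (\<psi> 4))) \<le> Re (trace (N 4))" by (rule tr_le[OF P(4) G(4) G(2) G(8) G(6) G(12)])
  have "trace (N 1) + trace (N 2) + trace (N 3) + trace (N 4) = trace (1\<^sub>m 2)"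
    using P(5-8) P(9)[symmetric] by (simp add: trace_add2)
  also have "trace (1\<^sub>m 2 :: complex mat) = 2" by (simp add: trace2)
  finally have s0: "trace (N 1) + trace (N 2) + trace (N 3) + trace (N 4) = 2" .
  have s: "Re (trace (N 1)) + Re (trace (N 2)) + Re (trace (N 3)) + Re (trace (N 4)) = 2"
    using arg_cong[OF s0, of Re] by simp
  show ?thesis unfolding sum4 using t1 t2 t3 t4 s by simp
qed

lemma K4: assumes u: "u \<in> carrier_vec 2" and w: "w \<in> carrier_vec 2"
    and uu: "braket u u = 1" and ww: "braket w w = 1" and uw: "braket u w = 0"
  shows "(1/4) \<cdot>\<^sub>m 1\<^sub>m 2 = complex_of_real (1/4) \<cdot>\<^sub>m ketbra u + complex_of_real (1/4) \<cdot>\<^sub>m ketbra w"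
  using compl2[OF u w uu ww uw] add_smult_distrib_left_mat[OF ketbra_carrier[OF u] ketbra_carrier[OF w], of "1/4"]
  by simp

definition Mw :: "(nat \<Rightarrow> complex vec) \<Rightarrow> nat \<Rightarrow> complex mat" where
  "Mw \<psi> x = (if x = 1 then ketbra (\<psi> 1) else if x = 3 then ketbra (\<psi> 3) else 0\<^sub>m 2 2)"

lemma Mw_simps: "Mw \<psi> (Suc 0) = ketbra (\<psi> (Suc 0))" "Mw \<psi> 1 = ketbra (\<psi> 1)" "Mw \<psi> 2 = 0\<^sub>m 2 2" "Mw \<psi> 3 = ketbra (\<psi> 3)" "Mw \<psi> 4 = 0\<^sub>m 2 2"
  by (simp_all add: Mw_def)

lemma x4: "(x::nat) \<in> {1..4} \<Longrightarrow> x = 1 \<or> x = 2 \<or> x = 3 \<or> x = 4" by auto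

lemma povm_Mw: assumes g: "good \<psi>" shows "is_povm 2 {1..4} (Mw \<psi>)"
proof -
  note G = goodD[OF g]
  have p: "psd 2 (Mw \<psi> x)" if "x \<in> {1..4}" for x
    using x4[OF that] G psd_ketbra psd_zero_mat by (auto simp: Mw_simps)
  have C: "ketbra (\<psi> 1) + ketbra (\<psi> 3) = 1\<^sub>m 2" by (rule compl2[OF G(1) G(3) G(5) G(7) G(9)])
  have e: "mat 2 2 (\<lambda>ij. \<Sum>x\<in>{1..4}. Mw \<psi> x $$ ij) $$ (i,j) = (1\<^sub>m 2 :: complex mat) $$ (i,j)"
    if "i < 2" "j < 2" for i j
  proof -
    have "mat 2 2 (\<lambda>ij. \<Sum>x\<in>{1..4}. Mw \<psi> x $$ ij) $$ (i,j) = ketbra (\<psi> 1) $$ (i,j) + ketbra (\<psi> 3) $$ (i,j)"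
      unfolding sum4 Mw_simps using that by simp
    also have "\<dots> = (ketbra (\<psi> 1) + ketbra (\<psi> 3)) $$ (i,j)"
      using that carrier_vecD[OF G(3)] carrier_vecD[OF G(1)] by simp
    finally show ?thesis using C by simp
  qed
  show ?thesis unfolding is_povm_def
    using p e by (auto intro!: eq_matI)
qed

lemma trace_zero2[simp]: "trace (0\<^sub>m 2 2 :: complex mat) = 0"
  by (simp add: trace2)
lemma trace_zero_mult: "v \<in> carrier_vec 2 \<Longrightarrow> trace (0\<^sub>m 2 2 * ketbra v) = 0"
  by (simp add: trace2 ketbra_carrier)

lemma value_Mw: assumes g: "good \<psi>"
  shows "Re (\<Sum>x\<in>{1..4}. complex_of_real (1/4) * trace (Mw \<psi> x * ketbra (\<psi> x))) = 1/2"
proof -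
  note G = goodD[OF g]
  show ?thesis unfolding sum4 Mw_simps
    using G by (simp add: trace_kk trace_zero_mult)
qed

lemma exist: assumes g: "good \<psi>"
  shows "is_symm_op 2 {1..4} (\<lambda>_. 1/4) (\<lambda>x. ketbra (\<psi> x)) ((1/4) \<cdot>\<^sub>m 1\<^sub>m 2)"
proof -
  note G = goodD[OF g]
  define \<sigma> :: "nat \<Rightarrow> complex mat" where "\<sigma> x = (if x = 1 then ketbra (\<psi> 3) else if x = 2 then ketbra (\<psi> 4)
     else if x = 3 then ketbra (\<psi> 1) else ketbra (\<psi> 2))" for x
  have k13: "(1/4) \<cdot>\<^sub>m 1\<^sub>m 2 = complex_of_real (1/4) \<cdot>\<^sub>m ketbra (\<psi> 1) + complex_of_real (1/4) \<cdot>\<^sub>m ketbra (\<psi> 3)"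
    by (rule K4[OF G(1) G(3) G(5) G(7) G(9)])
  have k31: "(1/4) \<cdot>\<^sub>m 1\<^sub>m 2 = complex_of_real (1/4) \<cdot>\<^sub>m ketbra (\<psi> 3) + complex_of_real (1/4) \<cdot>\<^sub>m ketbra (\<psi> 1)"
    by (rule K4[OF G(3) G(1) G(7) G(5) G(11)])
  have k24: "(1/4) \<cdot>\<^sub>m 1\<^sub>m 2 = complex_of_real (1/4) \<cdot>\<^sub>m ketbra (\<psi> 2) + complex_of_real (1/4) \<cdot>\<^sub>m ketbra (\<psi> 4)"
    by (rule K4[OF G(2) G(4) G(6) G(8) G(10)])
  have k42: "(1/4) \<cdot>\<^sub>m 1\<^sub>m 2 = complex_of_real (1/4) \<cdot>\<^sub>m ketbra (\<psi> 4) + complex_of_real (1/4) \<cdot>\<^sub>m ketbra (\<psi> 2)"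
    by (rule K4[OF G(4) G(2) G(8) G(6) G(12)])
  have d: "density 2 (ketbra (\<psi> x))" if "x \<in> {1..4}" for x
    using x4[OF that] density_ketbra[OF G(1) G(5)] density_ketbra[OF G(2) G(6)]
      density_ketbra[OF G(3) G(7)] density_ketbra[OF G(4) G(8)] by auto
  have t13: "trace (ketbra (\<psi> 1) * ketbra (\<psi> 3)) = 0" "trace (ketbra (\<psi> 3) * ketbra (\<psi> 1)) = 0"
    using G by (simp_all add: trace_kk)
  have ax: "0 \<le> (1/4::real) \<and> density 2 (\<sigma> x) \<and>
      (1/4) \<cdot>\<^sub>m 1\<^sub>m 2 = complex_of_real (1/4) \<cdot>\<^sub>m ketbra (\<psi> x) + complex_of_real (1/4) \<cdot>\<^sub>m \<sigma> x \<and>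
      complex_of_real (1/4) * trace (Mw \<psi> x * \<sigma> x) = 0" if "x \<in> {1..4}" for x
  proof -
    have s1: "\<sigma> 1 = ketbra (\<psi> 3)" "\<sigma> 2 = ketbra (\<psi> 4)" "\<sigma> 3 = ketbra (\<psi> 1)" "\<sigma> 4 = ketbra (\<psi> 2)"
      unfolding \<sigma>_def by simp_all
    have m1: "Mw \<psi> 1 = ketbra (\<psi> 1)" "Mw \<psi> 2 = 0\<^sub>m 2 2" "Mw \<psi> 3 = ketbra (\<psi> 3)" "Mw \<psi> 4 = 0\<^sub>m 2 2"
      by (simp_all add: Mw_def)
    have z2: "trace (0\<^sub>m 2 2 * ketbra (\<psi> 4)) = 0" "trace (0\<^sub>m 2 2 * ketbra (\<psi> 2)) = 0"
      using trace_zero_mult G(2) G(4) by auto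
    have dd: "density 2 (ketbra (\<psi> 1))" "density 2 (ketbra (\<psi> 2))" "density 2 (ketbra (\<psi> 3))" "density 2 (ketbra (\<psi> 4))"
      using d by auto
    from x4[OF that] show ?thesis
    proof (elim disjE)
      assume "x = 1" thus ?thesis using s1(1) m1(1) dd(3) k13 t13(1) by simp
    next
      assume "x = 2" thus ?thesis using s1(2) m1(2) dd(4) k24 z2(1) by simp
    next
      assume "x = 3" thus ?thesis using s1(3) m1(3) dd(1) k31 t13(2) by simp
    next
      assume "x = 4" thus ?thesis using s1(4) m1(4) dd(2) k42 z2(2) by simp
    qed
  qed
  show ?thesis unfolding is_symm_op_def
    apply (intro conjI)
      apply simp
     apply (simp add: herm2)
    apply (rule exI[where x="\<lambda>_. 1/4"], rule exI[where x=\<sigma>], rule exI[where x="Mw \<psi>"])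
    apply (rule conjI[OF povm_Mw[OF g]])
    apply (rule ballI)
    apply (drule ax)
    apply assumption
    done
qed

lemma trace_sum4_mult:
  assumes "A \<in> carrier_mat 2 2" "B \<in> carrier_mat 2 2" "C \<in> carrier_mat 2 2" "D \<in> carrier_mat 2 2" "K \<in> carrier_mat 2 2"
  shows "trace ((A + B + C + D) * K) = trace (A * K) + trace (B * K) + trace (C * K) + trace (D * K)"
proof -
  have s: "A + B + C + D \<in> carrier_mat 2 2" using assms by simp
  have e: "((A + B + C + D) * K) $$ (i,i) = (A * K) $$ (i,i) + (B * K) $$ (i,i) + (C * K) $$ (i,i) + (D * K) $$ (i,i)"
    if "i < 2" for i
    using assms s that by (simp add: mult2 ring_distribs del: index_mult_mat)
  have c: "A * K \<in> carrier_mat 2 2" "B * K \<in> carrier_mat 2 2" "C * K \<in> carrier_mat 2 2" "D * K \<in> carrier_mat 2 2"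
    "(A + B + C + D) * K \<in> carrier_mat 2 2" using assms s by auto
  show ?thesis unfolding trace2[OF c(1)] trace2[OF c(2)] trace2[OF c(3)] trace2[OF c(4)] trace2[OF c(5)]
    using e[of 0] e[of 1] by (simp del: index_mult_mat)
qed

lemma KPu: assumes u: "u \<in> carrier_vec 2" and uu: "braket u u = 1" and P: "P \<in> carrier_mat 2 2"
    and K: "K = c \<cdot>\<^sub>m ketbra u + P"
  shows "K *\<^sub>v u = c \<cdot>\<^sub>v u + P *\<^sub>v u" "braket u (K *\<^sub>v u) = c + braket u (P *\<^sub>v u)"
proof -
  have kc: "c \<cdot>\<^sub>m ketbra u \<in> carrier_mat 2 2" using ketbra_carrier[OF u] by simp
  have "K *\<^sub>v u = (c \<cdot>\<^sub>m ketbra u) *\<^sub>v u + P *\<^sub>v u"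
    unfolding K by (rule add_mult_distrib_mat_vec[OF kc P u])
  also have "(c \<cdot>\<^sub>m ketbra u) *\<^sub>v u = c \<cdot>\<^sub>v u"
    using smult_mulv2[OF ketbra_carrier[OF u] u] ketbra_mulv[OF u u] uu by simp
  finally show kv: "K *\<^sub>v u = c \<cdot>\<^sub>v u + P *\<^sub>v u" .
  show "braket u (K *\<^sub>v u) = c + braket u (P *\<^sub>v u)"
    unfolding kv using u P uu by (simp add: braket_add2 braket_smult2)
qed

lemma unique: assumes g: "good \<psi>" and S: "is_symm_op 2 {1..4} (\<lambda>_. 1/4) (\<lambda>x. ketbra (\<psi> x)) K"
  shows "K = (1/4) \<cdot>\<^sub>m 1\<^sub>m 2"
proof -
  note G = goodD[OF g]
  define c where "c = complex_of_real (1/4)"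
  have Kc: "K \<in> carrier_mat 2 2" using S unfolding is_symm_op_def by auto
  have "\<exists>r \<sigma> M. is_povm 2 {1..4} M \<and>
        (\<forall>x\<in>{1..4::nat}. r x \<ge> 0 \<and> density 2 (\<sigma> x) \<and>
           K = complex_of_real ((\<lambda>_. 1/4) x) \<cdot>\<^sub>m (\<lambda>x. ketbra (\<psi> x)) x + complex_of_real (r x) \<cdot>\<^sub>m \<sigma> x \<and>
           complex_of_real (r x) * trace (M x * \<sigma> x) = 0)"
    using S unfolding is_symm_op_def by (elim conjE) assumption
  then obtain r \<sigma> M where M: "is_povm 2 {1..4} M"
    and hx0: "\<forall>x\<in>{1..4::nat}. r x \<ge> 0 \<and> density 2 (\<sigma> x) \<and>
           K = complex_of_real ((\<lambda>_. 1/4) x) \<cdot>\<^sub>m (\<lambda>x. ketbra (\<psi> x)) x + complex_of_real (r x) \<cdot>\<^sub>m \<sigma> x \<and>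
           complex_of_real (r x) * trace (M x * \<sigma> x) = 0"
    by blast
  have hx: "r x \<ge> 0 \<and> density 2 (\<sigma> x) \<and>
           K = c \<cdot>\<^sub>m ketbra (\<psi> x) + complex_of_real (r x) \<cdot>\<^sub>m \<sigma> x \<and>
           complex_of_real (r x) * trace (M x * \<sigma> x) = 0" if "x \<in> {1..4}" for x
    using bspec[OF hx0 that] unfolding c_def by simp
  note PM = povmD[OF M]
  define P where "P x = complex_of_real (r x) \<cdot>\<^sub>m \<sigma> x" for x
  have Pp: "psd 2 (P x)" if "x \<in> {1..4}" for x
    unfolding P_def using hx[OF that] psd_smult unfolding density_def by blast
  have Pc: "P x \<in> carrier_mat 2 2" if "x \<in> {1..4}" for x
    using Pp[OF that] unfolding psd_def by auto
  have KP: "K = c \<cdot>\<^sub>m ketbra (\<psi> x) + P x" if "x \<in> {1..4}" for x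
    using hx[OF that] unfolding P_def by auto
  have psi: "\<psi> x \<in> carrier_vec 2" if "x \<in> {1..4}" for x
    using x4[OF that] G by auto
  have Mc: "M x \<in> carrier_mat 2 2" if "x \<in> {1..4}" for x
    using x4[OF that] PM by auto
  have tMK: "trace (M x * K) = c * trace (M x * ketbra (\<psi> x))" if x: "x \<in> {1..4}" for x
  proof -
    have sc: "\<sigma> x \<in> carrier_mat 2 2" using hx[OF x] unfolding density_def psd_def by auto
    have kc: "ketbra (\<psi> x) \<in> carrier_mat 2 2" using ketbra_carrier[OF psi[OF x]] .
    have "M x * K = M x * (c \<cdot>\<^sub>m ketbra (\<psi> x)) + M x * (complex_of_real (r x) \<cdot>\<^sub>m \<sigma> x)"
      using hx[OF x] mult_add_distrib_mat[OF Mc[OF x], of "c \<cdot>\<^sub>m ketbra (\<psi> x)" 2 "complex_of_real (r x) \<cdot>\<^sub>m \<sigma> x"] kc sc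
      by simp
    also have "\<dots> = c \<cdot>\<^sub>m (M x * ketbra (\<psi> x)) + complex_of_real (r x) \<cdot>\<^sub>m (M x * \<sigma> x)"
      using Mc[OF x] kc sc by (simp add: mult_smult_distrib)
    finally have "trace (M x * K) = c * trace (M x * ketbra (\<psi> x)) + complex_of_real (r x) * trace (M x * \<sigma> x)"
      using Mc[OF x] kc sc by (simp add: trace_add2 trace_smult2)
    thus ?thesis using hx[OF x] by simp
  qed
  have "K = (M 1 + M 2 + M 3 + M 4) * K" using PM(9) Kc by simp
  hence "trace K = trace (M 1 * K) + trace (M 2 * K) + trace (M 3 * K) + trace (M 4 * K)"
    using trace_sum4_mult[OF PM(5-8) Kc] by simp
  also have "\<dots> = (\<Sum>x\<in>{1..4}. complex_of_real (1/4) * trace (M x * ketbra (\<psi> x)))"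
  proof -
    have i: "(1::nat) \<in> {1..4}" "(2::nat) \<in> {1..4}" "(3::nat) \<in> {1..4}" "(4::nat) \<in> {1..4}" by auto
    show ?thesis unfolding sum4
      by (simp only: tMK[OF i(1), unfolded c_def] tMK[OF i(2), unfolded c_def] tMK[OF i(3), unfolded c_def] tMK[OF i(4), unfolded c_def])
  qed
  finally have t1: "Re (trace K) \<le> 1/2" using bound[OF g M] by simp
  have k13: "ketbra (\<psi> 1) + ketbra (\<psi> 3) = 1\<^sub>m 2" by (rule compl2[OF G(1) G(3) G(5) G(7) G(9)])
  have "K = K * (ketbra (\<psi> 1) + ketbra (\<psi> 3))" using k13 Kc by simp
  also have "\<dots> = K * ketbra (\<psi> 1) + K * ketbra (\<psi> 3)"
    using Kc ketbra_carrier[OF G(1)] ketbra_carrier[OF G(3)] by (simp add: mult_add_distrib_mat)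
  finally have Ks: "K = K * ketbra (\<psi> 1) + K * ketbra (\<psi> 3)" .
  hence "trace K = braket (\<psi> 1) (K *\<^sub>v \<psi> 1) + braket (\<psi> 3) (K *\<^sub>v \<psi> 3)"
    using Kc ketbra_carrier[OF G(1)] ketbra_carrier[OF G(3)]
    by (metis trace_add2 mult_carrier_mat tr_ketbra G(1) G(3))
  also have "\<dots> = c + braket (\<psi> 1) (P 1 *\<^sub>v \<psi> 1) + (c + braket (\<psi> 3) (P 3 *\<^sub>v \<psi> 3))"
    using KPu(2)[OF G(1) G(5) Pc[of 1] KP[of 1]] KPu(2)[OF G(3) G(7) Pc[of 3] KP[of 3]] by simp
  finally have "Re (trace K) = 1/2 + Re (braket (\<psi> 1) (P 1 *\<^sub>v \<psi> 1)) + Re (braket (\<psi> 3) (P 3 *\<^sub>v \<psi> 3))"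
    by (simp add: c_def)
  moreover have "0 \<le> Re (braket (\<psi> 1) (P 1 *\<^sub>v \<psi> 1))" "0 \<le> Re (braket (\<psi> 3) (P 3 *\<^sub>v \<psi> 3))"
    using Pp[of 1] Pp[of 3] G(1) G(3) unfolding psd_def by auto
  ultimately have r1: "Re (braket (\<psi> 1) (P 1 *\<^sub>v \<psi> 1)) \<le> 0" and r3: "Re (braket (\<psi> 3) (P 3 *\<^sub>v \<psi> 3)) \<le> 0"
    using t1 by linarith+
  have z1: "P 1 *\<^sub>v \<psi> 1 = 0\<^sub>v 2" by (rule psd_zero[OF Pp[of 1] G(1) r1]) simp
  have z3: "P 3 *\<^sub>v \<psi> 3 = 0\<^sub>v 2" by (rule psd_zero[OF Pp[of 3] G(3) r3]) simp
  have e1: "K *\<^sub>v \<psi> 1 = c \<cdot>\<^sub>v \<psi> 1"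
    using KPu(1)[OF G(1) G(5) Pc[of 1] KP[of 1]] z1 G(1) by simp
  have e3: "K *\<^sub>v \<psi> 3 = c \<cdot>\<^sub>v \<psi> 3"
    using KPu(1)[OF G(3) G(7) Pc[of 3] KP[of 3]] z3 G(3) by simp
  have "K = c \<cdot>\<^sub>m ketbra (\<psi> 1) + c \<cdot>\<^sub>m ketbra (\<psi> 3)"
    using Ks mul_ketbra_eig[OF Kc G(1) e1] mul_ketbra_eig[OF Kc G(3) e3] by simp
  also have "\<dots> = (1/4) \<cdot>\<^sub>m 1\<^sub>m 2" unfolding c_def by (rule K4[OF G(1) G(3) G(5) G(7) G(9), symmetric])
  finally show ?thesis .
qed

lemma adj_one2: "mat_adjoint (1\<^sub>m 2 :: complex mat) = 1\<^sub>m 2"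
  by (rule mat_eq2) (simp_all add: adj_carrier adj_idx[OF one_carrier_mat])

lemma all_parts: assumes g: "good \<psi>"
  shows "is_symm_op 2 {1..4} (\<lambda>_. 1/4) (\<lambda>x. ketbra (\<psi> x)) ((1/4) \<cdot>\<^sub>m 1\<^sub>m 2)"
    "\<forall>K. is_symm_op 2 {1..4} (\<lambda>_. 1/4) (\<lambda>x. ketbra (\<psi> x)) K \<longrightarrow> K = (1/4) \<cdot>\<^sub>m 1\<^sub>m 2"
    "symm_op 2 {1..4} (\<lambda>_. 1/4) (\<lambda>x. ketbra (\<psi> x)) = (1/4) \<cdot>\<^sub>m 1\<^sub>m 2"
    "pguess 2 {1..4} (\<lambda>_. 1/4) (\<lambda>x. ketbra (\<psi> x)) = 1/2"
proof -
  show e: "is_symm_op 2 {1..4} (\<lambda>_. 1/4) (\<lambda>x. ketbra (\<psi> x)) ((1/4) \<cdot>\<^sub>m 1\<^sub>m 2)" by (rule exist[OF g])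
  show u: "\<forall>K. is_symm_op 2 {1..4} (\<lambda>_. 1/4) (\<lambda>x. ketbra (\<psi> x)) K \<longrightarrow> K = (1/4) \<cdot>\<^sub>m 1\<^sub>m 2"
    using unique[OF g] by (intro allI impI)
  show "symm_op 2 {1..4} (\<lambda>_. 1/4) (\<lambda>x. ketbra (\<psi> x)) = (1/4) \<cdot>\<^sub>m 1\<^sub>m 2"
    unfolding symm_op_def
    by (rule the_equality[where P="is_symm_op 2 {1..4} (\<lambda>_. 1/4) (\<lambda>x. ketbra (\<psi> x))", OF e]) (use u in blast)
  show "pguess 2 {1..4} (\<lambda>_. 1/4) (\<lambda>x. ketbra (\<psi> x)) = 1/2"
    unfolding pguess_def
  proof (rule cSup_eq_maximum)
    show "1/2 \<in> {Re (\<Sum>x\<in>{1..4}. complex_of_real ((\<lambda>_. 1/4) x) * trace (M x * (\<lambda>x. ketbra (\<psi> x)) x)) | M. is_povm 2 {1..4} M}"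
      apply (rule CollectI, rule exI[of _ "Mw \<psi>"], rule conjI)
      using value_Mw[OF g] povm_Mw[OF g] by simp_all
    fix y assume "y \<in> {Re (\<Sum>x\<in>{1..4}. complex_of_real ((\<lambda>_. 1/4) x) * trace (M x * (\<lambda>x. ketbra (\<psi> x)) x)) | M. is_povm 2 {1..4} M}"
    then obtain M where M: "is_povm 2 {1..4} M"
      and y: "y = Re (\<Sum>x\<in>{1..4}. complex_of_real ((\<lambda>_. 1/4) x) * trace (M x * (\<lambda>x. ketbra (\<psi> x)) x))"
      by blast
    show "y \<le> 1/2" unfolding y using bound[OF g M] by simp
  qed
qed

theorem mainTheorem7:
  fixes \<psi> \<phi> :: "nat \<Rightarrow> complex vec"
  assumes "\<forall>x\<in>{1..4}. \<psi> x \<in> carrier_vec 2 \<and> braket (\<psi> x) (\<psi> x) = 1"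
      and "braket (\<psi> 1) (\<psi> 3) = 0" and "braket (\<psi> 2) (\<psi> 4) = 0"
      and "\<forall>x\<in>{1..4}. \<phi> x \<in> carrier_vec 2 \<and> braket (\<phi> x) (\<phi> x) = 1"
      and "braket (\<phi> 1) (\<phi> 3) = 0" and "braket (\<phi> 2) (\<phi> 4) = 0"
  shows "is_symm_op 2 {1..4} (\<lambda>_. 1/4) (\<lambda>x. ketbra (\<psi> x)) ((1/4) \<cdot>\<^sub>m 1\<^sub>m 2)
       \<and> (\<forall>K. is_symm_op 2 {1..4} (\<lambda>_. 1/4) (\<lambda>x. ketbra (\<psi> x)) K \<longrightarrow> K = (1/4) \<cdot>\<^sub>m 1\<^sub>m 2)
       \<and> symm_op 2 {1..4} (\<lambda>_. 1/4) (\<lambda>x. ketbra (\<psi> x)) = (1/4) \<cdot>\<^sub>m 1\<^sub>m 2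
       \<and> ens_equiv 2 {1..4} (\<lambda>_. 1/4) (\<lambda>x. ketbra (\<psi> x)) {1..4} (\<lambda>_. 1/4) (\<lambda>x. ketbra (\<phi> x))
       \<and> pguess 2 {1..4} (\<lambda>_. 1/4) (\<lambda>x. ketbra (\<psi> x)) = 1/2
       \<and> trace (symm_op 2 {1..4} (\<lambda>_. 1/4) (\<lambda>x. ketbra (\<psi> x))) = 1/2"
proof -
  have g: "good \<psi>" unfolding good_def using assms(1-3) by blast
  have h: "good \<phi>" unfolding good_def using assms(4-6) by blast
  note A = all_parts[OF g] and B = all_parts[OF h]
  have eq: "ens_equiv 2 {1..4} (\<lambda>_. 1/4) (\<lambda>x. ketbra (\<psi> x)) {1..4} (\<lambda>_. 1/4) (\<lambda>x. ketbra (\<phi> x))"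
    unfolding ens_equiv_def
  proof (intro exI[of _ "1\<^sub>m 2"] conjI)
    show "unitary 2 (1\<^sub>m 2)" unfolding unitary_def adj_one2 by simp
    show "symm_op 2 {1..4} (\<lambda>_. 1/4) (\<lambda>x. ketbra (\<phi> x)) =
      1\<^sub>m 2 * symm_op 2 {1..4} (\<lambda>_. 1/4) (\<lambda>x. ketbra (\<psi> x)) * mat_adjoint (1\<^sub>m 2)"
      unfolding A(3) B(3) adj_one2 by simp
  qed
  have tr: "trace ((1/4) \<cdot>\<^sub>m 1\<^sub>m 2 :: complex mat) = 1/2" by (simp add: trace2)
  have t2: "trace (symm_op 2 {1..4} (\<lambda>_. 1/4) (\<lambda>x. ketbra (\<psi> x))) = 1/2"
    unfolding A(3) by (rule tr)
  show ?thesis using A(1) A(2) A(3) eq A(4) t2 by (intro conjI)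
qed

end
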